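(* Let $G$ be a twin-free graph with $G\ne K_1$ and $G\ne K_2$. Then for every $t\ge1$, $\det(\mu_t(G))=\det(G)$ if $G$ has no isolated vertex, and $\det(\mu_t(G))=\det(G)+t-1$ otherwise.
   Context: All graphs are finite and simple. For a graph $G$ with $V(G)=\{v_1,\dots,v_n\}$ and an integer $t\ge1$, the generalized Mycielskian $\mu_t(G)$ has vertex set $\{u_i^s: 1\le i\le n,\ 0\le s\le t\}\cup\{w\}$, where $u_i^0$ is identified with $v_i$. Its edges are: $u_i^0u_j^0$ for each edge $v_iv_j$ of $G$; $u_i^su_j^{s+1}$ and $u_j^su_i^{s+1}$ for each edge $v_iv_j$ of $G$ and each $0\le s<t$; and $u_i^tw$ for all $1\le i\le n$. A set $S\subseteq V(G)$ is a determining set for $G$ if the only automorphism of $G$ fixing every vertex of $S$ is the identity; $\det(G)$ is the minimum size of a determining set. Two vertices are twins if they have the same open neighborhood; $G$ is twin-free if it has no pair of distinct twin vertices. *)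

theory Defs
  imports Main
begin

definition simple_graph :: "'a set \<Rightarrow> ('a \<Rightarrow> 'a \<Rightarrow> bool) \<Rightarrow> bool" where
  "simple_graph V E \<longleftrightarrow> finite V \<and> (\<forall>x y. E x y \<longrightarrow> x \<in> V \<and> y \<in> V)
     \<and> (\<forall>x y. E x y \<longrightarrow> E y x) \<and> (\<forall>x. \<not> E x x)"

definition automorphism :: "'a set \<Rightarrow> ('a \<Rightarrow> 'a \<Rightarrow> bool) \<Rightarrow> ('a \<Rightarrow> 'a) \<Rightarrow> bool" where
  "automorphism V E f \<longleftrightarrow> bij_betw f V V \<and> (\<forall>x\<in>V. \<forall>y\<in>V. E x y \<longleftrightarrow> E (f x) (f y))"

definition determining_set :: "'a set \<Rightarrow> ('a \<Rightarrow> 'a \<Rightarrow> bool) \<Rightarrow> 'a set \<Rightarrow> bool" where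
  "determining_set V E S \<longleftrightarrow> S \<subseteq> V \<and>
     (\<forall>f. automorphism V E f \<and> (\<forall>x\<in>S. f x = x) \<longrightarrow> (\<forall>x\<in>V. f x = x))"

definition det_num :: "'a set \<Rightarrow> ('a \<Rightarrow> 'a \<Rightarrow> bool) \<Rightarrow> nat" where
  "det_num V E = (LEAST k. \<exists>S. determining_set V E S \<and> card S = k)"

definition twin_free :: "'a set \<Rightarrow> ('a \<Rightarrow> 'a \<Rightarrow> bool) \<Rightarrow> bool" where
  "twin_free V E \<longleftrightarrow> (\<forall>x\<in>V. \<forall>y\<in>V. {z. E x z} = {z. E y z} \<longrightarrow> x = y)"

definition has_isolated_vertex :: "'a set \<Rightarrow> ('a \<Rightarrow> 'a \<Rightarrow> bool) \<Rightarrow> bool" where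
  "has_isolated_vertex V E \<longleftrightarrow> (\<exists>v\<in>V. \<forall>u. \<not> E v u)"

text \<open>Generalized Mycielskian: vertex u_i^s is Some (v_i, s), the root w is None.\<close>
definition myc_V :: "'a set \<Rightarrow> nat \<Rightarrow> ('a \<times> nat) option set" where
  "myc_V V t = {Some (v, s) | v s. v \<in> V \<and> s \<le> t} \<union> {None}"

definition myc_E :: "'a set \<Rightarrow> ('a \<Rightarrow> 'a \<Rightarrow> bool) \<Rightarrow> nat
     \<Rightarrow> ('a \<times> nat) option \<Rightarrow> ('a \<times> nat) option \<Rightarrow> bool" where
  "myc_E V E t x y \<longleftrightarrow> x \<in> myc_V V t \<and> y \<in> myc_V V t \<and>
     (case (x, y) of
        (Some (a, s), Some (b, r)) \<Rightarrow>
          E a b \<and> ((s = 0 \<and> r = 0) \<or> r = s + 1 \<or> s = r + 1)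
      | (Some (a, s), None) \<Rightarrow> s = t
      | (None, Some (b, r)) \<Rightarrow> r = t
      | (None, None) \<Rightarrow> False)"

end

theory Submission
  imports Defs
begin

locale myc =
  fixes V :: "'a set" and E :: "'a \<Rightarrow> 'a \<Rightarrow> bool" and t :: nat
  assumes sg: "simple_graph V E"
    and tf: "twin_free V E"
    and t1: "t \<ge> 1"
begin

abbreviation "M \<equiv> myc_V V t"
abbreviation "F \<equiv> myc_E V E t"

lemma finV: "finite V" using sg by (simp add: simple_graph_def)
lemma EV1: "E a b \<Longrightarrow> a \<in> V" using sg by (simp add: simple_graph_def)
lemma EV2: "E a b \<Longrightarrow> b \<in> V" using sg by (simp add: simple_graph_def)
lemma Esym: "E a b \<Longrightarrow> E b a" using sg by (simp add: simple_graph_def)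
lemma Eirr[simp]: "\<not> E a a" using sg by (simp add: simple_graph_def)

lemma M_None[simp]: "None \<in> M" by (simp add: myc_V_def)
lemma M_Some[simp]: "Some (a, s) \<in> M \<longleftrightarrow> a \<in> V \<and> s \<le> t" by (auto simp add: myc_V_def)

lemma F_NN[simp]: "\<not> F None None" by (simp add: myc_E_def)
lemma F_SN[simp]: "F (Some (a, s)) None \<longleftrightarrow> a \<in> V \<and> s = t" by (auto simp add: myc_E_def)
lemma F_NS[simp]: "F None (Some (a, s)) \<longleftrightarrow> a \<in> V \<and> s = t" by (auto simp add: myc_E_def)
lemma F_SS[simp]: "F (Some (a, s)) (Some (b, r)) \<longleftrightarrow>
   s \<le> t \<and> r \<le> t \<and> E a b \<and> ((s = 0 \<and> r = 0) \<or> r = s + 1 \<or> s = r + 1)"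
  by (auto simp add: myc_E_def dest: EV1 EV2)

lemma F_M1: "F x y \<Longrightarrow> x \<in> M" by (simp add: myc_E_def)
lemma F_M2: "F x y \<Longrightarrow> y \<in> M" by (simp add: myc_E_def)
lemma F_sym: "F x y \<Longrightarrow> F y x"
  by (cases x; cases y) (auto dest: Esym)

lemma finM: "finite M"
proof -
  have "M \<subseteq> insert None ((\<lambda>p. Some p) ` (V \<times> {..t}))" by (auto simp: myc_V_def)
  thus ?thesis using finV by (meson finite_SigmaI finite_atMost finite_imageI finite_insert finite_subset)
qed

end

context myc begin

definition S1 :: "('a \<times> nat) option \<Rightarrow> bool" where
  "S1 x \<longleftrightarrow> (\<forall>y. F x y \<longrightarrow> (\<exists>z\<in>M. z \<noteq> y \<and> \<not> F x z \<and> z \<noteq> x \<and> (\<forall>q. F y q \<and> q \<noteq> x \<longrightarrow> F z q)))"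

lemma S1_None: "S1 None"
  unfolding S1_def
proof (intro allI impI)
  fix y assume "F None y"
  then obtain u where y: "y = Some (u, t)" "u \<in> V"
    by (cases y) auto
  show "\<exists>z\<in>M. z \<noteq> y \<and> \<not> F None z \<and> z \<noteq> None \<and> (\<forall>q. F y q \<and> q \<noteq> None \<longrightarrow> F z q)"
  proof (rule bexI[of _ "Some (u, t - 2)"], intro conjI allI impI)
    fix q assume "F y q \<and> q \<noteq> None"
    then obtain b r where "q = Some (b, r)" by (cases q) auto
    with \<open>F y q \<and> q \<noteq> None\<close> y t1 show "F (Some (u, t - 2)) q" by auto
  qed (use y t1 in auto)
qed

lemma cardN_None: "card {y. F None y} = card V"
proof -
  have "{y. F None y} = (\<lambda>v. Some (v, t)) ` V"
  proof (rule set_eqI)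
    fix y show "y \<in> {y. F None y} \<longleftrightarrow> y \<in> (\<lambda>v. Some (v, t)) ` V"
      by (cases y) auto
  qed
  moreover have "inj_on (\<lambda>v. Some (v, t)) V" by (auto simp: inj_on_def)
  ultimately show ?thesis by (simp add: card_image)
qed

end

context myc begin

lemma S1E:
  assumes "S1 x" "F x Y" "F Y p" "p \<noteq> x" "F Y q" "q \<noteq> x"
  obtains z where "z \<in> M" "z \<noteq> Y" "\<not> F x z" "z \<noteq> x" "F z p" "F z q"
  using assms unfolding S1_def by blast

lemma twin_eq: "a \<in> V \<Longrightarrow> b \<in> V \<Longrightarrow> (\<And>z. E a z \<longleftrightarrow> E b z) \<Longrightarrow> a = b"
  using tf unfolding twin_free_def by blast

lemma K2I: "a \<noteq> b \<Longrightarrow> V = {a, b} \<Longrightarrow> E a b \<Longrightarrow> \<exists>a b. a \<noteq> b \<and> V = {a, b} \<and> E a b"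
  by (intro exI conjI)

lemma not_w:
  assumes nK1: "\<not> (\<exists>a. V = {a})" and nK2: "\<not> (\<exists>a b. a \<noteq> b \<and> V = {a, b} \<and> E a b)"
    and x: "x = Some (u, s)" "u \<in> V" "s \<le> t"
    and c: "card {y. F x y} = card V" and S: "S1 x"
  shows False
proof (cases "s = t")
  case True
  have Nsub: "{y. F x y} \<subseteq> insert None ((\<lambda>v. Some (v, t - 1)) ` {v. E u v})"
  proof
    fix y assume "y \<in> {y. F x y}"
    then show "y \<in> insert None ((\<lambda>v. Some (v, t - 1)) ` {v. E u v})"
      using x True by (cases y) auto
  qed
  have fN: "finite {v. E u v}" using finV by (rule rev_finite_subset) (auto dest: EV2)
  have "card V \<le> card (insert None ((\<lambda>v. Some (v, t - 1)) ` {v. E u v}))"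
    unfolding c[symmetric] by (rule card_mono) (use fN Nsub in auto)
  also have "\<dots> \<le> card {v. E u v} + 1"
    using fN by (simp add: card_insert_le_m1 card_image_le le_SucI card_insert_if)
  finally have c1: "card V \<le> card {v. E u v} + 1" .
  have sub: "{v. E u v} \<subseteq> V - {u}" by (auto dest: EV2)
  have "card (V - {u}) = card V - 1" using x(2) finV by simp
  hence cc: "card (V - {u}) \<le> card {v. E u v}" using c1 by linarith
  have eq: "{v. E u v} = V - {u}"
    by (rule card_seteq[OF _ sub cc]) (simp add: finV)
  have "\<exists>v b. v \<in> V \<and> v \<noteq> u \<and> E v b \<and> b \<noteq> u"
  proof (rule ccontr)
    assume H: "\<not> ?thesis"
    have H': "z = u" if "w \<in> V" "w \<noteq> u" "E w z" for w z
    proof (rule ccontr)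
      assume "z \<noteq> u" thus False using H that by blast
    qed
    have "\<exists>v\<in>V. v \<noteq> u"
    proof (rule ccontr)
      assume "\<not> (\<exists>v\<in>V. v \<noteq> u)" hence "V \<subseteq> {u}" by blast
      hence "V = {u}" using x(2) by blast
      hence "\<exists>a. V = {a}" by (rule exI)
      thus False by (rule notE[OF nK1])
    qed
    then obtain v where v: "v \<in> V" "v \<noteq> u" by blast
    have Nv: "E w z \<longleftrightarrow> z = u" if "w \<in> V" "w \<noteq> u" for w z
    proof -
      have "w \<in> {v. E u v}" unfolding eq using that by simp
      hence "E w u" using Esym by blast
      thus ?thesis using H'[OF that] by blast
    qed
    have V2: "V \<subseteq> {u, v}"
    proof
      fix w assume w: "w \<in> V"
      show "w \<in> {u, v}"
      proof (cases "w = u")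
        case False
        have "w = v" by (rule twin_eq) (use w v Nv False in auto)
        thus ?thesis by simp
      qed simp
    qed
    hence "V = {u, v}" using x(2) v by auto
    moreover have "E u v"
    proof -
      have "v \<in> {v. E u v}" unfolding eq using v by simp
      thus ?thesis by simp
    qed
    ultimately have "\<exists>a b. a \<noteq> b \<and> V = {a, b} \<and> E a b" using K2I[of u v] v(2) by blast
    thus False by (rule notE[OF nK2])
  qed
  then obtain v b where vb: "v \<in> V" "v \<noteq> u" "E v b" "b \<noteq> u" by blast
  have "E u v"
  proof -
    have "v \<in> {v. E u v}" unfolding eq using vb by simp
    thus ?thesis by simp
  qed
  have xt: "x = Some (u, t)" using x True by simp
  have FY: "F x (Some (v, t - 1))" unfolding xt using t1 \<open>E u v\<close> by simp
  have Fp: "F (Some (v, t - 1)) (Some (u, t - 2))" using t1 vb Esym[OF \<open>E u v\<close>] by auto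
  have Fq: "F (Some (v, t - 1)) (Some (b, t))" using t1 vb by auto
  have pn: "Some (u, t - 2) \<noteq> x" using xt t1 by simp
  have qn: "Some (b, t) \<noteq> x" using xt vb by simp
  obtain z where z: "z \<in> M" "z \<noteq> Some (v, t - 1)" "\<not> F x z" "z \<noteq> x" "F z (Some (u, t - 2))" "F z (Some (b, t))"
    by (rule S1E[OF S FY Fp pn Fq qn])
  show False
  proof (cases z)
    case None thus ?thesis using z t1 by auto
  next
    case (Some p)
    then obtain a r where zp: "z = Some (a, r)" by (cases p) auto
    have "r = t - 1" "E a b" using z zp t1 by auto
    hence "a \<in> V" by (auto dest: EV1)
    have "\<not> E u a" using z(3) zp xt \<open>r = t - 1\<close> t1 by auto
    hence "a \<notin> {v. E u v}" by simp
    hence "a = u" unfolding eq using \<open>a \<in> V\<close> by simp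
    thus False using z(5) zp by auto
  qed
next
  case False
  hence st: "s < t" using x by simp
  have "\<exists>y b. E u y \<and> E y b \<and> b \<noteq> u"
  proof (rule ccontr)
    assume H: "\<not> ?thesis"
    have Ny: "\<And>y z. E u y \<Longrightarrow> E y z \<longleftrightarrow> z = u" using H Esym by blast
    show False
    proof (cases "\<exists>y. E u y")
      case False
      have "{y. F x y} = {}"
      proof -
        { fix y assume "F x y"
          hence False using x st False by (cases y) auto }
        thus ?thesis by auto
      qed
      hence "card V = 0" using c by simp
      thus False using finV x(2) by auto
    next
      case True
      then obtain y where y: "E u y" by blast
      have uniq: "\<And>y'. E u y' \<Longrightarrow> y' = y"
        using twin_eq Ny y EV2 by metis
      have "{y. F x y} \<subseteq> {Some (y, s - 1), Some (y, s + 1)}"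
      proof
        fix q assume "q \<in> {y. F x y}"
        thus "q \<in> {Some (y, s - 1), Some (y, s + 1)}"
          using x st uniq by (cases q) auto
      qed
      hence "card {y. F x y} \<le> card {Some (y, s - 1), Some (y, s + 1)}"
        by (intro card_mono) auto
      also have "\<dots> \<le> 2" by (simp add: card_insert_if)
      finally have "card {y. F x y} \<le> 2" .
      hence cV: "card V \<le> 2" using c by simp
      have uy: "u \<noteq> y" "y \<in> V" using y by (auto dest: EV2)
      have "{u, y} \<subseteq> V" using uy x by auto
      moreover have "card {u, y} = 2" using uy by simp
      ultimately have "{u, y} = V" using cV finV by (metis card_seteq)
      hence "\<exists>a b. a \<noteq> b \<and> V = {a, b} \<and> E a b" using K2I[OF uy(1) _ y] by simp
      thus False by (rule notE[OF nK2])
    qed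
  qed
  then obtain y b where yb: "E u y" "E y b" "b \<noteq> u" by blast
  show False
  proof (cases "s = 0")
    case True
    have FY: "F x (Some (y, 0))" using x True yb by auto
    have Fp: "F (Some (y, 0)) (Some (b, 0))" using yb t1 by auto
    have Fq: "F (Some (y, 0)) (Some (u, 1))" using yb t1 Esym[OF yb(1)] by auto
    have pn: "Some (b, 0) \<noteq> x" using x True yb by simp
    have qn: "Some (u, 1) \<noteq> x" using x True by simp
    obtain z where z: "z \<in> M" "z \<noteq> Some (y, 0)" "\<not> F x z" "z \<noteq> x" "F z (Some (b, 0))" "F z (Some (u, 1))"
      by (rule S1E[OF S FY Fp pn Fq qn])
    show False
    proof (cases z)
      case None thus ?thesis using z t1 by auto
    next
      case (Some p)
      then obtain a r where zp: "z = Some (a, r)" by (cases p) auto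
      have ra: "r = 0" "E a u" using z zp by auto
      thus False using z(3) zp x True st Esym[OF ra(2)] by auto
    qed
  next
    case False
    have FY: "F x (Some (y, s - 1))" using x False yb st by auto
    have Fp: "F (Some (y, s - 1)) (Some (u, s - 2))" using yb st False Esym[OF yb(1)] by auto
    have Fq: "F (Some (y, s - 1)) (Some (b, s))" using yb st False by auto
    have pn: "Some (u, s - 2) \<noteq> x" using x False by simp
    have qn: "Some (b, s) \<noteq> x" using x yb by simp
    obtain z where z: "z \<in> M" "z \<noteq> Some (y, s - 1)" "\<not> F x z" "z \<noteq> x" "F z (Some (u, s - 2))" "F z (Some (b, s))"
      by (rule S1E[OF S FY Fp pn Fq qn])
    show False
    proof (cases z)
      case None thus ?thesis using z st by auto
    next
      case (Some p)
      then obtain a r where zp: "z = Some (a, r)" by (cases p) auto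
      have ra: "r = s - 1" "E a u" using z zp False by auto
      thus False using z(3) zp x False st Esym[OF ra(2)] by auto
    qed
  qed
qed

end

lemma aut_in: "automorphism V E f \<Longrightarrow> x \<in> V \<Longrightarrow> f x \<in> V"
  unfolding automorphism_def bij_betw_def by blast
lemma aut_surj: assumes "automorphism V E f" "y \<in> V" shows "\<exists>x\<in>V. f x = y"
proof -
  have "f ` V = V" using assms(1) unfolding automorphism_def bij_betw_def by blast
  hence "y \<in> f ` V" using assms(2) by simp
  thus ?thesis by blast
qed
lemma aut_inj: "automorphism V E f \<Longrightarrow> x \<in> V \<Longrightarrow> y \<in> V \<Longrightarrow> f x = f y \<Longrightarrow> x = y"
  unfolding automorphism_def bij_betw_def inj_on_def by blast
lemma aut_E: "automorphism V E f \<Longrightarrow> x \<in> V \<Longrightarrow> y \<in> V \<Longrightarrow> E (f x) (f y) \<longleftrightarrow> E x y"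
  unfolding automorphism_def by blast

context myc begin

lemma autN:
  assumes a: "automorphism M F f" and x: "x \<in> M"
  shows "{y. F (f x) y} = f ` {y. F x y}"
proof (rule set_eqI, rule iffI)
  fix y assume "y \<in> {y. F (f x) y}"
  hence Fy: "F (f x) y" by simp
  hence "y \<in> M" by (rule F_M2)
  then obtain y0 where y0: "y0 \<in> M" "f y0 = y" using aut_surj[OF a] by blast
  have "F (f x) (f y0)" using Fy y0(2) by simp
  hence "F x y0" using aut_E[OF a x y0(1)] by simp
  thus "y \<in> f ` {y. F x y}" using y0(2) by blast
next
  fix y assume "y \<in> f ` {y. F x y}"
  then obtain y0 where y0: "F x y0" "y = f y0" by blast
  have "y0 \<in> M" using y0(1) by (rule F_M2)
  hence "F (f x) (f y0)" using y0(1) aut_E[OF a x] by simp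
  thus "y \<in> {y. F (f x) y}" using y0(2) by simp
qed

lemma aut_card:
  assumes a: "automorphism M F f" and x: "x \<in> M"
  shows "card {y. F (f x) y} = card {y. F x y}"
proof -
  have "inj_on f {y. F x y}"
  proof (rule inj_onI)
    fix p q assume "p \<in> {y. F x y}" "q \<in> {y. F x y}" "f p = f q"
    thus "p = q" using aut_inj[OF a, of p q] F_M2[of x p] F_M2[of x q] by simp
  qed
  thus ?thesis using autN[OF a x] by (simp add: card_image)
qed

lemma aut_S1:
  assumes a: "automorphism M F f" and x: "x \<in> M" and S: "S1 x"
  shows "S1 (f x)"
  unfolding S1_def
proof (intro allI impI)
  fix y assume Fy: "F (f x) y"
  hence "y \<in> M" by (rule F_M2)
  then obtain y0 where y0: "y0 \<in> M" "f y0 = y" using aut_surj[OF a] by blast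
  have Fy0: "F x y0" using Fy y0 aut_E[OF a x y0(1)] by simp
  then obtain z0 where z0: "z0 \<in> M" "z0 \<noteq> y0" "\<not> F x z0" "z0 \<noteq> x"
      "\<And>q. F y0 q \<Longrightarrow> q \<noteq> x \<Longrightarrow> F z0 q"
    using S unfolding S1_def by blast
  show "\<exists>z\<in>M. z \<noteq> y \<and> \<not> F (f x) z \<and> z \<noteq> f x \<and> (\<forall>q. F y q \<and> q \<noteq> f x \<longrightarrow> F z q)"
  proof (rule bexI[of _ "f z0"], intro conjI allI impI)
    show "f z0 \<in> M" using aut_in[OF a z0(1)] .
    show "f z0 \<noteq> y" using z0 y0 aut_inj[OF a] by blast
    show "\<not> F (f x) (f z0)" using z0 aut_E[OF a x z0(1)] by simp
    show "f z0 \<noteq> f x" using z0 x aut_inj[OF a] by blast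
    fix q assume q: "F y q \<and> q \<noteq> f x"
    hence "q \<in> M" using F_M2 by blast
    then obtain q0 where q0: "q0 \<in> M" "f q0 = q" using aut_surj[OF a] by blast
    have "F y0 q0" using q q0 y0 aut_E[OF a y0(1) q0(1)] by simp
    moreover have "q0 \<noteq> x" using q q0 by blast
    ultimately have "F z0 q0" using z0 by blast
    thus "F (f z0) q" using q0 aut_E[OF a z0(1) q0(1)] by simp
  qed
qed

lemma fix_w:
  assumes nK1: "\<not> (\<exists>a. V = {a})" and nK2: "\<not> (\<exists>a b. a \<noteq> b \<and> V = {a, b} \<and> E a b)"
    and a: "automorphism M F f"
  shows "f None = None"
proof (rule ccontr)
  assume "f None \<noteq> None"
  then obtain u s where us: "f None = Some (u, s)" by auto
  have "f None \<in> M" using aut_in[OF a] by simp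
  hence "u \<in> V" "s \<le> t" using us by auto
  moreover have "card {y. F (f None) y} = card V" using aut_card[OF a] cardN_None by simp
  moreover have "S1 (f None)" using aut_S1[OF a _ S1_None] by simp
  ultimately show False using not_w[OF nK1 nK2 us] by simp
qed

end

context myc begin

definition iso :: "'a \<Rightarrow> bool" where "iso u \<longleftrightarrow> (\<forall>z. \<not> E u z)"

primrec R :: "nat \<Rightarrow> ('a \<times> nat) option set" where
  "R 0 = {None}"
| "R (Suc k) = R k \<union> {y \<in> M. \<exists>x\<in>R k. F x y}"

lemmas R_Suc = R.simps(2)
declare R.simps(2)[simp del]

definition C :: "nat \<Rightarrow> ('a \<times> nat) option set" where
  "C k = insert None {Some (v, s) | v s. v \<in> V \<and> s \<le> t \<and> (s = t \<or> (\<not> iso v \<and> t + 1 \<le> s + k))}"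

lemma R_M: "R k \<subseteq> M"
  by (induction k) (auto simp: R_Suc)

lemma R1: "R (Suc 0) = C (Suc 0)"
proof (rule set_eqI)
  fix x show "x \<in> R (Suc 0) \<longleftrightarrow> x \<in> C (Suc 0)"
  proof (cases x)
    case None thus ?thesis by (simp add: C_def R_Suc)
  next
    case (Some p) then obtain v s where "x = Some (v, s)" by (cases p) auto
    thus ?thesis by (auto simp: C_def R_Suc)
  qed
qed

lemma RC: "1 \<le> k \<Longrightarrow> k \<le> t + 1 \<Longrightarrow> R k = C k"
proof (induction k rule: dec_induct)
  case base thus ?case using R1 by simp
next
  case (step k)
  have IH: "R k = C k" using step by simp
  show ?case
  proof (rule set_eqI)
    fix x show "x \<in> R (Suc k) \<longleftrightarrow> x \<in> C (Suc k)"
    proof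
      assume "x \<in> R (Suc k)"
      hence "x \<in> C k \<or> (x \<in> M \<and> (\<exists>y\<in>C k. F y x))" using IH by (simp add: R_Suc)
      thus "x \<in> C (Suc k)"
      proof
        assume "x \<in> C k" thus ?thesis by (auto simp: C_def)
      next
        assume "x \<in> M \<and> (\<exists>y\<in>C k. F y x)"
        then obtain y where y: "y \<in> C k" "F y x" "x \<in> M" by blast
        show ?thesis
        proof (cases x)
          case None thus ?thesis by (simp add: C_def)
        next
          case (Some p) then obtain b r where x: "x = Some (b, r)" by (cases p) auto
          show ?thesis
          proof (cases y)
            case None thus ?thesis using x y by (auto simp: C_def)
          next
            case (Some q) then obtain v s where yv: "y = Some (v, s)" by (cases q) auto
            have e: "E v b" "r \<le> t" "(s = 0 \<and> r = 0) \<or> r = s + 1 \<or> s = r + 1" using y x yv by auto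
            have "\<not> iso b" using e Esym unfolding iso_def by blast
            moreover have "s = t \<or> t + 1 \<le> s + k" using y(1) yv by (auto simp: C_def)
            ultimately show ?thesis using x e step.hyps EV2[OF e(1)] by (auto simp: C_def)
          qed
        qed
      qed
    next
      assume xC: "x \<in> C (Suc k)"
      show "x \<in> R (Suc k)"
      proof (cases "x \<in> C k")
        case True thus ?thesis using IH by (simp add: R_Suc)
      next
        case False
        then obtain v s where x: "x = Some (v, s)" "v \<in> V" "s \<le> t" "\<not> iso v" "s + k = t"
          using xC by (auto simp: C_def)
        then obtain b where b: "E v b" unfolding iso_def by blast
        have nb: "\<not> iso b" using b Esym unfolding iso_def by blast
        have "Some (b, s + 1) \<in> C k" using x nb EV2[OF b] step.hyps by (auto simp: C_def)
        moreover have "F (Some (b, s + 1)) x" using x Esym[OF b] step.hyps by auto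
        moreover have "x \<in> M" using x by simp
        ultimately show ?thesis using IH unfolding R_Suc by blast
      qed
    qed
  qed
qed

lemma R_aut:
  assumes a: "automorphism M F f" and w: "f None = None"
  shows "f ` R k = R k"
proof (induction k)
  case 0 thus ?case using w by simp
next
  case (Suc k)
  have "f ` {y \<in> M. \<exists>x\<in>R k. F x y} = {y \<in> M. \<exists>x\<in>R k. F x y}"
  proof (rule set_eqI, rule iffI)
    fix y assume "y \<in> f ` {y \<in> M. \<exists>x\<in>R k. F x y}"
    then obtain y0 x where y0: "y = f y0" "y0 \<in> M" "x \<in> R k" "F x y0" by blast
    have xM: "x \<in> M" using y0 R_M by blast
    have "F (f x) y" using y0 aut_E[OF a xM y0(2)] by simp
    moreover have "f x \<in> R k" using Suc y0 by blast
    moreover have "y \<in> M" using y0 aut_in[OF a] by blast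
    ultimately show "y \<in> {y \<in> M. \<exists>x\<in>R k. F x y}" by blast
  next
    fix y assume "y \<in> {y \<in> M. \<exists>x\<in>R k. F x y}"
    then obtain x where y: "y \<in> M" "x \<in> R k" "F x y" by blast
    obtain x0 where x0: "x0 \<in> R k" "f x0 = x" using Suc y by (metis imageE)
    obtain y0 where y0: "y0 \<in> M" "f y0 = y" using aut_surj[OF a y(1)] by blast
    have x0M: "x0 \<in> M" using x0 R_M by blast
    have "F x0 y0" using y x0 y0 aut_E[OF a x0M y0(1)] by simp
    thus "y \<in> f ` {y \<in> M. \<exists>x\<in>R k. F x y}" using x0 y0 by blast
  qed
  thus ?case using Suc by (simp add: image_Un R_Suc)
qed

lemma Rdiff_char:
  assumes "k \<le> t" "x \<in> R (Suc k) - R k"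
  shows "\<exists>y\<in>V. x = Some (y, t - k)"
proof (cases "k = 0")
  case True
  thus ?thesis using assms R1 by (auto simp: C_def )
next
  case False
  have "R (Suc k) = C (Suc k)" by (rule RC) (use assms(1) in auto)
  moreover have "R k = C k" by (rule RC) (use assms(1) False in auto)
  ultimately show ?thesis using assms by (auto simp: C_def)
qed

lemma Rdiff_mem:
  assumes "k \<le> t" "u \<in> V" "k = 0 \<or> \<not> iso u"
  shows "Some (u, t - k) \<in> R (Suc k) - R k"
proof (cases "k = 0")
  case True
  thus ?thesis using assms R1 by (auto simp: C_def )
next
  case False
  have "R (Suc k) = C (Suc k)" by (rule RC) (use assms(1) in auto)
  moreover have "R k = C k" by (rule RC) (use assms(1) False in auto)
  ultimately show ?thesis using assms False by (auto simp: C_def)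
qed

lemma aut_layer:
  assumes a: "automorphism M F f" and w: "f None = None"
    and r: "r \<le> t" "u \<in> V" "r = t \<or> \<not> iso u"
  shows "\<exists>y\<in>V. f (Some (u, r)) = Some (y, r)"
proof -
  define k where "k = t - r"
  have k: "k \<le> t" "r = t - k" "k = 0 \<or> \<not> iso u" using r by (auto simp: k_def)
  have m: "Some (u, r) \<in> R (Suc k) - R k" using Rdiff_mem[OF k(1) r(2) k(3)] k by simp
  have "f (Some (u, r)) \<in> R (Suc k)" using m R_aut[OF a w, of "Suc k"] by blast
  moreover have "f (Some (u, r)) \<notin> R k"
  proof
    assume "f (Some (u, r)) \<in> R k"
    then obtain x0 where "x0 \<in> R k" "f x0 = f (Some (u, r))" using R_aut[OF a w, of k] by (metis imageE)
    moreover have "x0 \<in> M" "Some (u, r) \<in> M" using calculation R_M r by auto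
    ultimately have "x0 = Some (u, r)" using aut_inj[OF a] by metis
    thus False using m \<open>x0 \<in> R k\<close> by simp
  qed
  ultimately show ?thesis using Rdiff_char[OF k(1)] k by auto
qed

end

context myc begin

definition isoM :: "('a \<times> nat) option \<Rightarrow> bool" where "isoM x \<longleftrightarrow> (\<forall>y. \<not> F x y)"

lemma iso_unique: "a \<in> V \<Longrightarrow> b \<in> V \<Longrightarrow> iso a \<Longrightarrow> iso b \<Longrightarrow> a = b"
  by (rule twin_eq) (auto simp: iso_def)

lemma aut_isoM:
  assumes a: "automorphism M F f" and x: "x \<in> M" "isoM x"
  shows "isoM (f x)"
  unfolding isoM_def
proof (intro allI notI)
  fix y assume "F (f x) y"
  moreover have "y \<in> M" using calculation F_M2 by blast
  then obtain y0 where "y0 \<in> M" "f y0 = y" using aut_surj[OF a] by blast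
  ultimately have "F x y0" using aut_E[OF a x(1)] by auto
  thus False using x(2) unfolding isoM_def by blast
qed

lemma isoM_char:
  assumes "Some (a, s) \<in> M" "isoM (Some (a, s))"
  shows "iso a \<and> s < t"
proof -
  have av: "a \<in> V" "s \<le> t" using assms(1) by auto
  show ?thesis
  proof (cases "iso a")
    case False
    then obtain b where b: "E a b" unfolding iso_def by blast
    have "F (Some (a, s)) (Some (b, if s < t then s + 1 else s - 1))" using b av t1 by auto
    thus ?thesis using assms(2) unfolding isoM_def by blast
  next
    case True
    have "s \<noteq> t"
    proof
      assume "s = t" hence "F (Some (a, s)) None" using av by simp
      thus False using assms(2) unfolding isoM_def by blast
    qed
    thus ?thesis using True av by simp
  qed
qed

lemma isoM_intro: "iso a \<Longrightarrow> s < t \<Longrightarrow> isoM (Some (a, s))"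
  unfolding isoM_def
proof (intro allI notI)
  fix y assume "iso a" "s < t" "F (Some (a, s)) y"
  thus False by (cases y) (auto simp: iso_def)
qed

lemma aut_fix_iso:
  assumes nK1: "\<not> (\<exists>a. V = {a})" and nK2: "\<not> (\<exists>a b. a \<noteq> b \<and> V = {a, b} \<and> E a b)"
    and a: "automorphism M F f"
    and fI: "\<And>s. s < t - 1 \<Longrightarrow> f (Some (v, s)) = Some (v, s)"
    and v: "v \<in> V" "iso v" and s: "s \<le> t"
  shows "f (Some (v, s)) = Some (v, s)"
proof -
  have w: "f None = None" using fix_w[OF nK1 nK2 a] .
  have lt: "f (Some (v, s)) = Some (v, s)" if "s < t" for s
  proof (cases "s < t - 1")
    case True thus ?thesis using fI by simp
  next
    case False
    hence s1: "s = t - 1" using that by simp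
    have xM: "Some (v, s) \<in> M" using v that by simp
    have "isoM (f (Some (v, s)))" using aut_isoM[OF a xM isoM_intro[OF v(2) that]] .
    moreover have "f (Some (v, s)) \<noteq> None"
    proof
      assume "f (Some (v, s)) = None"
      hence "f (Some (v, s)) = f None" using w by simp
      hence "Some (v, s) = None" using aut_inj[OF a xM M_None] by blast
      thus False by simp
    qed
    then obtain a' s' where fx: "f (Some (v, s)) = Some (a', s')" by auto
    moreover have "Some (a', s') \<in> M" using fx[symmetric] aut_in[OF a xM] by simp
    ultimately have as: "iso a'" "s' < t" "a' \<in> V" using isoM_char by auto
    hence "a' = v" using iso_unique v by blast
    show ?thesis
    proof (cases "s' < t - 1")
      case True
      hence "f (Some (v, s')) = f (Some (v, s))" using fI fx \<open>a' = v\<close> by simp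
      moreover have m': "Some (v, s') \<in> M" using v as by simp
      ultimately have "Some (v, s') = Some (v, s)" using aut_inj[OF a m' xM] by blast
      hence "s' = s" by simp
      thus ?thesis using True s1 by simp
    next
      case False
      hence "s' = s" using as s1 by simp
      thus ?thesis using fx \<open>a' = v\<close> by simp
    qed
  qed
  show ?thesis
  proof (cases "s < t")
    case True thus ?thesis using lt by simp
  next
    case False
    hence st: "s = t" using s by simp
    obtain y where y: "y \<in> V" "f (Some (v, t)) = Some (y, t)" using aut_layer[OF a w _ v(1)] by auto
    have "iso y"
      unfolding iso_def
    proof (intro allI notI)
      fix b assume b: "E y b"
      hence "F (Some (y, t)) (Some (b, t - 1))" using t1 by auto
      moreover have bM: "Some (b, t - 1) \<in> M" using EV2[OF b] by simp
      then obtain q0 where q0: "q0 \<in> M" "f q0 = Some (b, t - 1)" using aut_surj[OF a] by blast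
      ultimately have "F (f (Some (v, t))) (f q0)" using y by simp
      hence "F (Some (v, t)) q0" using aut_E[OF a _ q0(1)] v by simp
      hence "q0 = None" using v by (cases q0) (auto simp: iso_def)
      thus False using q0 w by simp
    qed
    hence "y = v" using iso_unique v y by blast
    thus ?thesis using y st by simp
  qed
qed

lemma aut_id:
  assumes nK1: "\<not> (\<exists>a. V = {a})" and nK2: "\<not> (\<exists>a b. a \<noteq> b \<and> V = {a, b} \<and> E a b)"
    and a: "automorphism M F f"
    and S: "determining_set V E S"
    and fS: "\<And>v. v \<in> S \<Longrightarrow> f (Some (v, 0)) = Some (v, 0)"
    and fI: "\<And>v s. v \<in> V \<Longrightarrow> iso v \<Longrightarrow> s < t - 1 \<Longrightarrow> f (Some (v, s)) = Some (v, s)"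
    and x: "x \<in> M"
  shows "f x = x"
proof -
  have w: "f None = None" using fix_w[OF nK1 nK2 a] .
  have isofix: "f (Some (v, s)) = Some (v, s)" if "v \<in> V" "iso v" "s \<le> t" for v s
    using aut_fix_iso[OF nK1 nK2 a _ that] fI that by blast
  define \<sigma> where "\<sigma> u = (if u \<in> V \<and> \<not> iso u then fst (the (f (Some (u, 0)))) else u)" for u
  have \<sigma>1: "f (Some (u, 0)) = Some (\<sigma> u, 0) \<and> \<sigma> u \<in> V" if "u \<in> V" "\<not> iso u" for u
  proof -
    have "\<exists>y\<in>V. f (Some (u, 0)) = Some (y, 0)" using aut_layer[OF a w, of 0 u] that by simp
    then obtain y where "y \<in> V" "f (Some (u, 0)) = Some (y, 0)" by blast
    thus ?thesis using that by (simp add: \<sigma>_def)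
  qed
  have \<sigma>2: "\<sigma> u = u" if "\<not> (u \<in> V \<and> \<not> iso u)" for u
    unfolding \<sigma>_def by (rule if_not_P[OF that])
  have \<sigma>V: "\<sigma> u \<in> V" if "u \<in> V" for u using \<sigma>1 \<sigma>2 that by metis
  have \<sigma>E0: "E (\<sigma> u) (\<sigma> v) \<longleftrightarrow> E u v" if "u \<in> V" "\<not> iso u" "v \<in> V" "\<not> iso v" for u v
  proof -
    have m: "Some (u, 0) \<in> M" "Some (v, 0) \<in> M" using that by auto
    have "E u v \<longleftrightarrow> F (Some (u, 0)) (Some (v, 0))" by simp
    also have "\<dots> \<longleftrightarrow> F (f (Some (u, 0))) (f (Some (v, 0)))" using aut_E[OF a m] by simp
    also have "\<dots> \<longleftrightarrow> E (\<sigma> u) (\<sigma> v)" using \<sigma>1 that by simp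
    finally show ?thesis by simp
  qed
  have \<sigma>iso: "\<not> iso (\<sigma> u)" if "u \<in> V" "\<not> iso u" for u
  proof -
    have "\<exists>b. E u b" using that(2) unfolding iso_def by blast
    then obtain b where b: "E u b" by blast
    have "\<not> iso b" using Esym[OF b] unfolding iso_def by blast
    hence "E (\<sigma> u) (\<sigma> b)" using \<sigma>E0[OF that EV2[OF b]] b by simp
    thus ?thesis unfolding iso_def by blast
  qed
  have \<sigma>E: "E (\<sigma> u) (\<sigma> v) \<longleftrightarrow> E u v" if "u \<in> V" "v \<in> V" for u v
  proof (cases "iso u")
    case True
    hence "\<sigma> u = u" using \<sigma>2 by blast
    thus ?thesis using True unfolding iso_def by simp
  next
    case nu: False
    show ?thesis
    proof (cases "iso v")
      case True
      hence "\<sigma> v = v" using \<sigma>2 by blast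
      thus ?thesis using True Esym unfolding iso_def by metis
    next
      case False thus ?thesis using \<sigma>E0 that nu by blast
    qed
  qed
  have inj: "inj_on \<sigma> V"
  proof (rule inj_onI)
    fix u v assume uv: "u \<in> V" "v \<in> V" "\<sigma> u = \<sigma> v"
    show "u = v"
    proof (cases "iso u"; cases "iso v")
      assume "iso u" "iso v" thus "u = v" using iso_unique uv by blast
    next
      assume "iso u" "\<not> iso v" thus "u = v" using \<sigma>iso[of v] \<sigma>2[of u] uv by auto
    next
      assume "\<not> iso u" "iso v" thus "u = v" using \<sigma>iso[of u] \<sigma>2[of v] uv by auto
    next
      assume nn: "\<not> iso u" "\<not> iso v"
      hence "f (Some (u, 0)) = f (Some (v, 0))" using \<sigma>1 uv by simp
      moreover have "Some (u, 0) \<in> M" "Some (v, 0) \<in> M" using uv by auto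
      ultimately have "Some (u, 0) = Some (v, 0)" using aut_inj[OF a] by blast
      thus "u = v" by simp
    qed
  qed
  have "\<sigma> ` V = V" using endo_inj_surj[OF finV _ inj] \<sigma>V by blast
  hence autg: "automorphism V E \<sigma>" using inj \<sigma>E unfolding automorphism_def bij_betw_def by simp
  have "\<forall>v\<in>S. \<sigma> v = v"
  proof
    fix v assume v: "v \<in> S"
    hence vV: "v \<in> V" using S unfolding determining_set_def by blast
    show "\<sigma> v = v"
    proof (cases "iso v")
      case True thus ?thesis using \<sigma>2 by blast
    next
      case False thus ?thesis using \<sigma>1[OF vV False] fS[OF v] by simp
    qed
  qed
  hence sid: "\<And>v. v \<in> V \<Longrightarrow> \<sigma> v = v" using S autg unfolding determining_set_def by blast
  have lay: "\<forall>u\<in>V. f (Some (u, s)) = Some (u, s)" if "s \<le> t" for s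
    using that
  proof (induction s)
    case 0
    show ?case
    proof
      fix u assume u: "u \<in> V"
      show "f (Some (u, 0)) = Some (u, 0)"
      proof (cases "iso u")
        case True thus ?thesis using isofix u by simp
      next
        case False thus ?thesis using \<sigma>1[OF u False] sid[OF u] by simp
      qed
    qed
  next
    case (Suc s)
    have IH: "\<And>z. z \<in> V \<Longrightarrow> f (Some (z, s)) = Some (z, s)" using Suc by simp
    show ?case
    proof
      fix u assume u: "u \<in> V"
      show "f (Some (u, Suc s)) = Some (u, Suc s)"
      proof (cases "iso u")
        case True thus ?thesis using isofix u Suc.prems by simp
      next
        case False
        obtain y where y: "y \<in> V" "f (Some (u, Suc s)) = Some (y, Suc s)"
          using aut_layer[OF a w Suc.prems u] False by auto
        have "E y z \<longleftrightarrow> E u z" for z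
        proof (cases "z \<in> V")
          case False thus ?thesis using EV2 by blast
        next
          case True
          have m: "Some (u, Suc s) \<in> M" "Some (z, s) \<in> M" using True u Suc.prems by auto
          have "E y z \<longleftrightarrow> F (Some (y, Suc s)) (Some (z, s))" using Suc.prems by simp
          also have "\<dots> \<longleftrightarrow> F (f (Some (u, Suc s))) (f (Some (z, s)))" using y IH[OF True] by simp
          also have "\<dots> \<longleftrightarrow> F (Some (u, Suc s)) (Some (z, s))" using aut_E[OF a m] by simp
          also have "\<dots> \<longleftrightarrow> E u z" using Suc.prems by simp
          finally show ?thesis .
        qed
        hence "y = u" using twin_eq y u by blast
        thus ?thesis using y by simp
      qed
    qed
  qed
  show ?thesis
  proof (cases x)
    case None thus ?thesis using w by simp
  next
    case (Some p)
    then obtain u s where "x = Some (u, s)" by (cases p) auto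
    thus ?thesis using lay x by auto
  qed
qed

end

lemma det_le: assumes "determining_set V E S" shows "det_num V E \<le> card S"
proof -
  have "\<exists>S'. determining_set V E S' \<and> card S' = card S" using assms by blast
  thus ?thesis unfolding det_num_def
    by (rule Least_le[of "\<lambda>k. \<exists>S. determining_set V E S \<and> card S = k"])
qed

lemma det_ex: "\<exists>S. determining_set V E S \<and> card S = det_num V E"
proof -
  have "determining_set V E V" unfolding determining_set_def by blast
  hence "\<exists>k. \<exists>S. determining_set V E S \<and> card S = k" by blast
  thus ?thesis unfolding det_num_def
    by (rule LeastI_ex[of "\<lambda>k. \<exists>S. determining_set V E S \<and> card S = k"])
qed

context myc begin

definition lift :: "('a \<Rightarrow> 'a) \<Rightarrow> ('a \<times> nat) option \<Rightarrow> ('a \<times> nat) option" where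
  "lift \<sigma> x = map_option (\<lambda>(v, s). (\<sigma> v, s)) x"

lemma lift_simps[simp]: "lift \<sigma> None = None" "lift \<sigma> (Some (v, s)) = Some (\<sigma> v, s)"
  by (simp_all add: lift_def)

lemma lift_aut:
  assumes g: "automorphism V E \<sigma>"
  shows "automorphism M F (lift \<sigma>)"
proof -
  have inj: "inj_on (lift \<sigma>) M"
  proof (rule inj_onI)
    fix x y assume xy: "x \<in> M" "y \<in> M" "lift \<sigma> x = lift \<sigma> y"
    show "x = y"
    proof (cases x; cases y)
      fix p q assume "x = Some p" "y = Some q"
      moreover obtain a s b r where "p = (a, s)" "q = (b, r)" by (cases p, cases q) auto
      ultimately show "x = y" using xy aut_inj[OF g] by auto
    qed (use xy in auto)
  qed
  have img: "lift \<sigma> ` M = M"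
  proof (rule set_eqI, rule iffI)
    fix y assume "y \<in> lift \<sigma> ` M"
    then obtain x where x: "x \<in> M" "y = lift \<sigma> x" by blast
    show "y \<in> M"
    proof (cases x)
      case (Some p) then obtain a s where "x = Some (a, s)" by (cases p) auto
      thus ?thesis using x aut_in[OF g] by auto
    qed (use x in auto)
  next
    fix y assume y: "y \<in> M"
    show "y \<in> lift \<sigma> ` M"
    proof (cases y)
      case None thus ?thesis by (metis M_None image_eqI lift_simps(1))
    next
      case (Some p) then obtain b r where yb: "y = Some (b, r)" by (cases p) auto
      then obtain a where "a \<in> V" "\<sigma> a = b" using y aut_surj[OF g] by auto
      hence "lift \<sigma> (Some (a, r)) = y" "Some (a, r) \<in> M" using yb y by auto
      thus ?thesis by (metis image_eqI)
    qed
  qed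
  have edge: "F x y \<longleftrightarrow> F (lift \<sigma> x) (lift \<sigma> y)" if "x \<in> M" "y \<in> M" for x y
  proof (cases x; cases y)
    fix p q assume "x = Some p" "y = Some q"
    moreover obtain a s b r where "p = (a, s)" "q = (b, r)" by (cases p, cases q) auto
    ultimately show ?thesis using that aut_E[OF g, of a b] by auto
  next
    fix p assume "x = Some p" "y = None"
    moreover obtain a s where "p = (a, s)" by (cases p) auto
    ultimately show ?thesis using that aut_in[OF g, of a] by auto
  next
    fix p assume "x = None" "y = Some p"
    moreover obtain a s where "p = (a, s)" by (cases p) auto
    ultimately show ?thesis using that aut_in[OF g, of a] by auto
  qed simp
  show ?thesis unfolding automorphism_def bij_betw_def using inj img edge by blast
qed

lemma lift_id:
  assumes "\<forall>x\<in>M. lift \<sigma> x = x" "v \<in> V"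
  shows "\<sigma> v = v"
  using assms(1)[rule_format, of "Some (v, 0)"] assms(2) by simp

lemma aut_iso:
  assumes g: "automorphism V E \<sigma>" and v: "v \<in> V" "iso v"
  shows "\<sigma> v = v"
proof -
  have "iso (\<sigma> v)"
    unfolding iso_def
  proof (intro allI notI)
    fix y assume e: "E (\<sigma> v) y"
    obtain y' where "y' \<in> V" "\<sigma> y' = y" using aut_surj[OF g EV2[OF e]] by blast
    hence "E v y'" using aut_E[OF g v(1)] e by auto
    thus False using v unfolding iso_def by blast
  qed
  thus ?thesis using iso_unique aut_in[OF g v(1)] v by blast
qed

lemma lower_noniso:
  assumes S': "determining_set M F S'"
  shows "\<exists>S. determining_set V E S \<and> card S \<le> card S'"
proof -
  define S where "S = {v. \<exists>s. Some (v, s) \<in> S'}"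
  have S'M: "S' \<subseteq> M" using S' unfolding determining_set_def by blast
  have fS': "finite S'" using finM S'M by (rule rev_finite_subset)
  have "S \<subseteq> (\<lambda>x. fst (the x)) ` S'" unfolding S_def by force
  hence cS: "card S \<le> card S'" by (meson card_image_le card_mono fS' finite_imageI le_trans)
  have SV: "S \<subseteq> V" using S'M unfolding S_def by auto
  have "determining_set V E S"
    unfolding determining_set_def
  proof (intro conjI allI impI SV)
    fix \<sigma> assume h: "automorphism V E \<sigma> \<and> (\<forall>x\<in>S. \<sigma> x = x)"
    have "\<forall>x\<in>S'. lift \<sigma> x = x"
    proof
      fix x assume x: "x \<in> S'"
      show "lift \<sigma> x = x"
      proof (cases x)
        case (Some p) then obtain a s where "x = Some (a, s)" by (cases p) auto
        thus ?thesis using h x unfolding S_def by auto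
      qed simp
    qed
    hence "\<forall>x\<in>M. lift \<sigma> x = x" using S' lift_aut h unfolding determining_set_def by blast
    thus "\<forall>x\<in>V. \<sigma> x = x" using lift_id by blast
  qed
  thus ?thesis using cS by blast
qed

lemma lower_iso:
  assumes S': "determining_set M F S'" and v0: "v0 \<in> V" "iso v0"
  shows "\<exists>S. determining_set V E S \<and> card S + (t - 1) \<le> card S'"
proof -
  define I where "I = (\<lambda>s. Some (v0, s)) ` {..<t}"
  have S'M: "S' \<subseteq> M" using S' unfolding determining_set_def by blast
  have fS': "finite S'" using finM S'M by (rule rev_finite_subset)
  have cI: "card I = t" unfolding I_def by (simp add: card_image inj_on_def)
  have fI: "finite I" unfolding I_def by simp
  have IM: "I \<subseteq> M" unfolding I_def using v0 by auto
  have isoI: "\<And>x. x \<in> I \<Longrightarrow> isoM x" unfolding I_def using isoM_intro v0 by auto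
  have le1: "card (I - S') \<le> 1"
  proof (rule ccontr)
    assume "\<not> card (I - S') \<le> 1"
    then obtain a b where ab: "a \<in> I - S'" "b \<in> I - S'" "a \<noteq> b"
      using card_le_Suc0_iff_eq[of "I - S'"] fI by auto
    define g where "g x = (if x = a then b else if x = b then a else x)" for x
    have aM: "a \<in> M" "b \<in> M" using ab IM by auto
    have ia: "isoM a" "isoM b" using ab isoI by auto
    have gg: "g (g x) = x" for x unfolding g_def by auto
    have gM: "g x \<in> M" if "x \<in> M" for x using that aM unfolding g_def by auto
    have inj: "inj_on g M" by (metis gg inj_onI)
    have img: "g ` M = M" using gM gg by (metis image_subsetI subsetI subset_antisym imageI)
    have ed: "F x y \<longleftrightarrow> F (g x) (g y)" if "x \<in> M" "y \<in> M" for x y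
    proof -
      have nF: "\<not> F z y'" "\<not> F y' z" if "z \<in> {a, b}" for z y'
        using that ia F_sym unfolding isoM_def by blast+
      show ?thesis
      proof (cases "x \<in> {a, b} \<or> y \<in> {a, b}")
        case True
        moreover have "g x \<in> {a, b} \<or> g y \<in> {a, b}" using True unfolding g_def by auto
        ultimately show ?thesis using nF by blast
      next
        case False thus ?thesis unfolding g_def by auto
      qed
    qed
    have "automorphism M F g" unfolding automorphism_def bij_betw_def using inj img ed by blast
    moreover have "\<forall>x\<in>S'. g x = x" using ab unfolding g_def by auto
    ultimately have "\<forall>x\<in>M. g x = x" using S' unfolding determining_set_def by blast
    hence "g a = a" using aM by blast
    thus False using ab unfolding g_def by auto
  qed
  have "card I = card (I \<inter> S') + card (I - S')" using fI
    by (metis card_Int_Diff)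
  hence cIS: "t - 1 \<le> card (S' \<inter> I)" using cI le1 by (simp add: Int_commute)
  define S where "S = {v. \<exists>s. Some (v, s) \<in> S' - I}"
  have "S \<subseteq> (\<lambda>x. fst (the x)) ` (S' - I)" unfolding S_def by force
  hence "card S \<le> card (S' - I)" by (meson card_image_le card_mono fS' finite_Diff finite_imageI le_trans)
  moreover have "card (S' - I) = card S' - card (S' \<inter> I)" using fS' by (simp add: card_Diff_subset_Int)
  moreover have "card (S' \<inter> I) \<le> card S'" using fS' by (simp add: card_mono)
  ultimately have cS: "card S + (t - 1) \<le> card S'" using cIS by linarith
  have SV: "S \<subseteq> V" using S'M unfolding S_def by auto
  have "determining_set V E S"
    unfolding determining_set_def
  proof (intro conjI allI impI SV)
    fix \<sigma> assume h: "automorphism V E \<sigma> \<and> (\<forall>x\<in>S. \<sigma> x = x)"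
    have s0: "\<sigma> v0 = v0" using aut_iso h v0 by blast
    have "\<forall>x\<in>S'. lift \<sigma> x = x"
    proof
      fix x assume x: "x \<in> S'"
      show "lift \<sigma> x = x"
      proof (cases x)
        case (Some p) then obtain a s where xa: "x = Some (a, s)" by (cases p) auto
        show ?thesis
        proof (cases "x \<in> I")
          case True hence "a = v0" unfolding I_def xa by auto
          thus ?thesis using xa s0 by simp
        next
          case False thus ?thesis using h x xa unfolding S_def by auto
        qed
      qed simp
    qed
    hence "\<forall>x\<in>M. lift \<sigma> x = x" using S' lift_aut h unfolding determining_set_def by blast
    thus "\<forall>x\<in>V. \<sigma> x = x" using lift_id by blast
  qed
  thus ?thesis using cS by blast
qed

end

context myc begin

lemma upper_noniso:
  assumes nK1: "\<not> (\<exists>a. V = {a})" and nK2: "\<not> (\<exists>a b. a \<noteq> b \<and> V = {a, b} \<and> E a b)"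
    and S: "determining_set V E S" and ni: "\<And>v. v \<in> V \<Longrightarrow> \<not> iso v"
  shows "\<exists>S'. determining_set M F S' \<and> card S' \<le> card S"
proof -
  define S' where "S' = (\<lambda>v. Some (v, 0::nat)) ` S"
  have SV: "S \<subseteq> V" using S unfolding determining_set_def by blast
  have fS: "finite S" using finV SV by (rule rev_finite_subset)
  have "card S' \<le> card S" unfolding S'_def using fS by (rule card_image_le)
  moreover have "determining_set M F S'"
    unfolding determining_set_def
  proof (intro conjI allI impI)
    show "S' \<subseteq> M" unfolding S'_def using SV by auto
    fix f assume h: "automorphism M F f \<and> (\<forall>x\<in>S'. f x = x)"
    show "\<forall>x\<in>M. f x = x"
    proof
      fix x assume x: "x \<in> M"
      show "f x = x"
      proof (rule aut_id[OF nK1 nK2 _ S _ _ x])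
        show "automorphism M F f" using h by blast
        show "f (Some (v, 0)) = Some (v, 0)" if "v \<in> S" for v using h that unfolding S'_def by blast
        show "f (Some (v, s)) = Some (v, s)" if "v \<in> V" "iso v" "s < t - 1" for v s
          using ni that by blast
      qed
    qed
  qed
  ultimately show ?thesis by blast
qed

lemma upper_iso:
  assumes nK1: "\<not> (\<exists>a. V = {a})" and nK2: "\<not> (\<exists>a b. a \<noteq> b \<and> V = {a, b} \<and> E a b)"
    and S: "determining_set V E S" and v0: "v0 \<in> V" "iso v0"
  shows "\<exists>S'. determining_set M F S' \<and> card S' \<le> card S + (t - 1)"
proof -
  define A where "A = (\<lambda>v. Some (v, 0::nat)) ` S"
  define B where "B = (\<lambda>s. Some (v0, s)) ` {..<t - 1}"
  define S' where "S' = A \<union> B"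
  have SV: "S \<subseteq> V" using S unfolding determining_set_def by blast
  have fS: "finite S" using finV SV by (rule rev_finite_subset)
  have c1: "card S' \<le> card A + card B" unfolding S'_def by (rule card_Un_le)
  have c2: "card A \<le> card S" unfolding A_def using fS by (rule card_image_le)
  have "card B \<le> card {..<t - 1}" unfolding B_def by (rule card_image_le) simp
  hence c3: "card B \<le> t - 1" by simp
  have cS: "card S' \<le> card S + (t - 1)" using c1 c2 c3 by linarith
  moreover have "determining_set M F S'"
    unfolding determining_set_def
  proof (intro conjI allI impI)
    show "S' \<subseteq> M" unfolding S'_def A_def B_def using SV v0 by auto
    fix f assume h: "automorphism M F f \<and> (\<forall>x\<in>S'. f x = x)"
    show "\<forall>x\<in>M. f x = x"
    proof
      fix x assume x: "x \<in> M"
      show "f x = x"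
      proof (rule aut_id[OF nK1 nK2 _ S _ _ x])
        show "automorphism M F f" using h by blast
        show "f (Some (v, 0)) = Some (v, 0)" if "v \<in> S" for v using h that unfolding S'_def A_def by blast
        show "f (Some (v, s)) = Some (v, s)" if "v \<in> V" "iso v" "s < t - 1" for v s
        proof -
          have "v = v0" using iso_unique that v0 by blast
          hence "Some (v, s) \<in> S'" unfolding S'_def B_def using that by blast
          thus ?thesis using h by blast
        qed
      qed
    qed
  qed
  ultimately show ?thesis by blast
qed

end

theorem mainTheorem3:
  fixes V :: "'a set" and E :: "'a \<Rightarrow> 'a \<Rightarrow> bool" and t :: nat
  assumes "simple_graph V E"
    and "twin_free V E"
    and "\<not> (\<exists>a. V = {a})"
    and "\<not> (\<exists>a b. a \<noteq> b \<and> V = {a, b} \<and> E a b)"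
    and "t \<ge> 1"
  shows "det_num (myc_V V t) (myc_E V E t) =
           (if has_isolated_vertex V E then det_num V E + t - 1 else det_num V E)"
proof -
  interpret myc V E t using assms(1,2,5) by unfold_locales
  have hi: "has_isolated_vertex V E \<longleftrightarrow> (\<exists>v\<in>V. iso v)"
    unfolding has_isolated_vertex_def iso_def by blast
  obtain S where S: "determining_set V E S" "card S = det_num V E" using det_ex by blast
  obtain S' where S': "determining_set M F S'" "card S' = det_num M F" using det_ex by blast
  show ?thesis
  proof (cases "\<exists>v\<in>V. iso v")
    case True
    then obtain v0 where v0: "v0 \<in> V" "iso v0" by blast
    obtain T where T: "determining_set M F T" "card T \<le> card S + (t - 1)"
      using upper_iso[OF assms(3,4) S(1) v0] by blast
    obtain U where U: "determining_set V E U" "card U + (t - 1) \<le> card S'"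
      using lower_iso[OF S'(1) v0] by blast
    have "det_num M F \<le> det_num V E + (t - 1)" using det_le[OF T(1)] T(2) S(2) by linarith
    moreover have "det_num V E + (t - 1) \<le> det_num M F" using det_le[OF U(1)] U(2) S'(2) by linarith
    ultimately show ?thesis using True hi assms(5) by simp
  next
    case False
    obtain T where T: "determining_set M F T" "card T \<le> card S"
      using upper_noniso[OF assms(3,4) S(1)] False by blast
    obtain U where U: "determining_set V E U" "card U \<le> card S'"
      using lower_noniso[OF S'(1)] by blast
    have "det_num M F \<le> det_num V E" using det_le[OF T(1)] T(2) S(2) by linarith
    moreover have "det_num V E \<le> det_num M F" using det_le[OF U(1)] U(2) S'(2) by linarith
    ultimately show ?thesis using False hi by simp
  qed
qed

end
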